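(* Let $R$ be a valuation domain of cardinality $\aleph_1$, $J/R$ a type with $J=\bigcup_{\sigma<\omega_1} r_\sigma^{-1}R$ as in the context, and $U$ a uniserial $R$-module of type $J/R$. If $U$ has a special family of functions, then $U$ is non-standard.
   Context: A valuation domain is an integral domain whose ideals are linearly ordered; $Q$ is its quotient field ($Q\neq R$). A module is uniserial if its submodules are linearly ordered by inclusion. A uniserial $R$-module is standard if it is isomorphic to $J'/A$ for $R$-submodules $A\subseteq J'$ of $Q$, and non-standard otherwise. For a uniserial $U$ and $0\neq a\in U$, let $\mathrm{Ann}(a)=\{r\in R: ra=0\}$ and $D(a)=\bigcup\{r^{-1}R: a\in rU\}$; $U$ has type $J/A$ if $J/A\cong D(a)/\mathrm{Ann}(a)$ (independent of $a$). A type $J/R$: $J$ is an $R$-submodule of $Q$ with $R\subseteq J$, written $J=\bigcup_{\sigma<\omega_1} r_\sigma^{-1}R$ with nonzero $r_\sigma\in R$ such that $r_\tau\mid r_\sigma$ for $\tau<\sigma$. Special family: for $U$ of type $J/R$, fix for each $\sigma<\omega_1$ an element $a_\sigma\in U$ with $\mathrm{Ann}(a_\sigma)=r_\sigma R$, and let $I_\sigma$ be the set of all $R$-module isomorphisms $a_\sigma R\to r_\sigma^{-1}R/R$. A family $\{f_\sigma:\sigma<\omega_1\}$ of functions $f_\sigma: I_\sigma\to\mathbb{Q}$ is a special family of functions for $U$ if whenever $\sigma<\rho$, $\varphi\in I_\rho$, $\psi\in I_\sigma$ and $\varphi$ extends $\psi$ (note $a_\sigma R\subseteq a_\rho R$ and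 $r_\sigma^{-1}R/R\subseteq r_\rho^{-1}R/R$), then $f_\sigma(\psi)<f_\rho(\varphi)$. $U$ is called explicitly non-standard if it has a special family of functions. *)

theory Defs
  imports Complex_Main HOL.Modules "HOL-Computational_Algebra.Fraction_Field" "HOL-Library.FuncSet"
begin

text \<open>R is modelled by a type 'r of class idom (integral domain); its quotient
field Q is the type 'r fract. R is embedded into Q via x maps to Fract x 1.\<close>

definition emb :: "'r::idom \<Rightarrow> 'r fract" where
  "emb x = Fract x 1"

definition Rq :: "'r::idom fract set" where
  "Rq = range emb"

definition ring_ideal :: "'r::idom set \<Rightarrow> bool" where
  "ring_ideal I \<longleftrightarrow> 0 \<in> I \<and> (\<forall>x\<in>I. \<forall>y\<in>I. x + y \<in> I) \<and> (\<forall>c. \<forall>x\<in>I. c * x \<in> I)"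

definition valuation_domain :: "'r::idom itself \<Rightarrow> bool" where
  "valuation_domain _ \<longleftrightarrow>
     (\<forall>I J :: 'r set. ring_ideal I \<and> ring_ideal J \<longrightarrow> I \<subseteq> J \<or> J \<subseteq> I)
   \<and> (Rq :: 'r fract set) \<noteq> UNIV"

definition principal :: "'r::idom \<Rightarrow> 'r set" where
  "principal r = {r * x | x. True}"

definition rinv :: "'r::idom \<Rightarrow> 'r fract set" where
  "rinv r = {Fract x r | x. True}"

definition qsub :: "'r::idom fract set \<Rightarrow> bool" where
  "qsub M \<longleftrightarrow> 0 \<in> M \<and> (\<forall>x\<in>M. \<forall>y\<in>M. x + y \<in> M) \<and> (\<forall>c. \<forall>x\<in>M. emb c * x \<in> M)"

definition qscale :: "'r::idom \<Rightarrow> 'r fract \<Rightarrow> 'r fract" where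
  "qscale c q = emb c * q"

definition coset :: "'r::idom fract set \<Rightarrow> 'r fract \<Rightarrow> 'r fract set" where
  "coset B y = (\<lambda>b. y + b) ` B"

text \<open>phi is an R-module homomorphism from the module (S, +, sc) into the
subquotient T/B of Q (elements of T/B are represented as cosets of B).\<close>
definition quot_hom ::
  "'x::plus set \<Rightarrow> ('r::idom \<Rightarrow> 'x \<Rightarrow> 'x) \<Rightarrow> 'r fract set \<Rightarrow> 'r fract set \<Rightarrow> ('x \<Rightarrow> 'r fract set) \<Rightarrow> bool" where
  "quot_hom S sc T B phi \<longleftrightarrow>
     (\<forall>x\<in>S. \<exists>y\<in>T. phi x = coset B y)
   \<and> (\<forall>x\<in>S. \<forall>x'\<in>S. \<forall>y y'. phi x = coset B y \<longrightarrow> phi x' = coset B y' \<longrightarrow> phi (x + x') = coset B (y + y'))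
   \<and> (\<forall>c. \<forall>x\<in>S. \<forall>y. phi x = coset B y \<longrightarrow> phi (sc c x) = coset B (emb c * y))"

text \<open>Isomorphism of subquotients J1/A1 and J2/A2 of Q (via the first isomorphism theorem:
a surjective homomorphism J1 onto J2/A2 with kernel A1).\<close>
definition qiso :: "'r::idom fract set \<Rightarrow> 'r fract set \<Rightarrow> 'r fract set \<Rightarrow> 'r fract set \<Rightarrow> bool" where
  "qiso J1 A1 J2 A2 \<longleftrightarrow> qsub J1 \<and> qsub A1 \<and> A1 \<subseteq> J1 \<and> qsub J2 \<and> qsub A2 \<and> A2 \<subseteq> J2 \<and>
     (\<exists>g. quot_hom J1 qscale J2 A2 g \<and> {x\<in>J1. g x = A2} = A1 \<and> (\<forall>y\<in>J2. \<exists>x\<in>J1. g x = coset A2 y))"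

text \<open>Uniserial module: submodules linearly ordered by inclusion. The module U is the
whole type 'm with scalar multiplication scale.\<close>
definition uniserial :: "('r::comm_ring_1 \<Rightarrow> 'm::ab_group_add \<Rightarrow> 'm) \<Rightarrow> bool" where
  "uniserial scale \<longleftrightarrow>
     (\<forall>A B. module.subspace scale A \<and> module.subspace scale B \<longrightarrow> A \<subseteq> B \<or> B \<subseteq> A)"

definition Ann :: "('r::idom \<Rightarrow> 'm::ab_group_add \<Rightarrow> 'm) \<Rightarrow> 'm \<Rightarrow> 'r set" where
  "Ann scale a = {r. scale r a = 0}"

definition Dset :: "('r::idom \<Rightarrow> 'm::ab_group_add \<Rightarrow> 'm) \<Rightarrow> 'm \<Rightarrow> 'r fract set" where
  "Dset scale a = \<Union> {rinv r | r. r \<noteq> 0 \<and> a \<in> range (scale r)}"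

definition cyc :: "('r::idom \<Rightarrow> 'm::ab_group_add \<Rightarrow> 'm) \<Rightarrow> 'm \<Rightarrow> 'm set" where
  "cyc scale a = range (\<lambda>r. scale r a)"

text \<open>U has type J/A: J/A is isomorphic to D(a)/Ann(a) (for a nonzero a; independent of a).\<close>
definition has_type :: "('r::idom \<Rightarrow> 'm::ab_group_add \<Rightarrow> 'm) \<Rightarrow> 'r fract set \<Rightarrow> 'r fract set \<Rightarrow> bool" where
  "has_type scale J A \<longleftrightarrow> (\<exists>a. a \<noteq> 0 \<and> qiso J A (Dset scale a) (emb ` Ann scale a))"

text \<open>Standard: U is isomorphic to J'/A for submodules A of J' of Q, i.e. there is a surjective
R-homomorphism J' onto U with kernel A.\<close>
definition standard :: "('r::idom \<Rightarrow> 'm::ab_group_add \<Rightarrow> 'm) \<Rightarrow> bool" where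
  "standard scale \<longleftrightarrow> (\<exists>J' A (g :: 'r fract \<Rightarrow> 'm). qsub J' \<and> qsub A \<and> A \<subseteq> J' \<and>
     (\<forall>x\<in>J'. \<forall>y\<in>J'. g (x + y) = g x + g y) \<and>
     (\<forall>c. \<forall>x\<in>J'. g (emb c * x) = scale c (g x)) \<and>
     g ` J' = UNIV \<and> {x\<in>J'. g x = 0} = A)"

text \<open>omega_1, realised as the successor cardinal of aleph_0 (an initial-ordinal well-order).\<close>
abbreviation omega1 :: "nat set rel" where
  "omega1 \<equiv> cardSuc natLeq"

text \<open>I_sigma: R-module isomorphisms from a_sigma R onto r_sigma^{-1}R/R (as extensional functions).\<close>
definition Iso_set :: "('r::idom \<Rightarrow> 'm::ab_group_add \<Rightarrow> 'm) \<Rightarrow> 'm \<Rightarrow> 'r \<Rightarrow> ('m \<Rightarrow> 'r fract set) set" where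
  "Iso_set scale a r = {phi. phi \<in> extensional (cyc scale a) \<and>
      quot_hom (cyc scale a) scale (rinv r) Rq phi \<and> inj_on phi (cyc scale a) \<and>
      (\<forall>y\<in>rinv r. \<exists>x\<in>cyc scale a. phi x = coset Rq y)}"

definition special_family ::
  "('r::idom \<Rightarrow> 'm::ab_group_add \<Rightarrow> 'm) \<Rightarrow> (nat set \<Rightarrow> 'r) \<Rightarrow> (nat set \<Rightarrow> 'm)
     \<Rightarrow> (nat set \<Rightarrow> ('m \<Rightarrow> 'r fract set) \<Rightarrow> rat) \<Rightarrow> bool" where
  "special_family scale rs a f \<longleftrightarrow>
     (\<forall>\<sigma>\<in>Field omega1. \<forall>\<rho>\<in>Field omega1. (\<sigma>, \<rho>) \<in> omega1 \<and> \<sigma> \<noteq> \<rho> \<longrightarrow>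
        (\<forall>phi\<in>Iso_set scale (a \<rho>) (rs \<rho>). \<forall>psi\<in>Iso_set scale (a \<sigma>) (rs \<sigma>).
           (\<forall>x\<in>cyc scale (a \<sigma>). phi x = psi x) \<longrightarrow> f \<sigma> psi < f \<rho> phi))"

end

theory Submission
  imports Defs "HOL-Library.Countable"
begin

lemma emb_add: "emb a + emb b = emb (a + b)" by (simp add: emb_def)
lemma emb_mult: "emb a * emb b = emb (a * b)" by (simp add: emb_def)
lemma emb_minus: "- emb a = emb (- a)" by (simp add: emb_def)
lemma emb_diff: "emb a - emb b = emb (a - b)" by (simp add: emb_def)
lemma emb_0: "emb 0 = 0" by (simp add: emb_def Zero_fract_def)
lemma emb_1: "emb 1 = 1" by (simp add: emb_def One_fract_def)
lemma emb_inj: "emb a = emb b \<longleftrightarrow> a = b" by (simp add: emb_def eq_fract)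

lemma mod_simps:
  assumes m: "module scale"
  shows "scale a (scale b x) = scale (a * b) x" "scale 1 x = x" "scale 0 x = 0" "scale a 0 = 0" "scale (- a) x = - scale a x"
  using module.scale_scale[OF m] module.scale_minus_left[OF m] module.scale_one[OF m] module.scale_zero_left[OF m]
    module.scale_zero_right[OF m] by auto

lemma mod_ldist:
  assumes m: "module scale"
  shows "scale (a + b) x = scale a x + scale b x" "scale (a - b) x = scale a x - scale b x"
  using module.scale_left_distrib[OF m] module.scale_left_diff_distrib[OF m] by auto

lemma Rq_iff: "x \<in> Rq \<longleftrightarrow> (\<exists>t. x = emb t)" by (auto simp: Rq_def)
lemma Rq_add: "x \<in> Rq \<Longrightarrow> y \<in> Rq \<Longrightarrow> x + y \<in> Rq"
  by (auto simp: Rq_iff emb_add)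
lemma Rq_diff: "x \<in> Rq \<Longrightarrow> y \<in> Rq \<Longrightarrow> x - y \<in> Rq"
  by (auto simp: Rq_iff emb_diff)
lemma Rq_mult: "x \<in> Rq \<Longrightarrow> y \<in> Rq \<Longrightarrow> x * y \<in> Rq"
  by (auto simp: Rq_iff emb_mult)
lemma Rq_0: "0 \<in> Rq" using emb_0 Rq_iff by metis

lemma coset_eq: fixes y y' :: "'r::idom fract" shows "coset Rq y = coset Rq y' \<longleftrightarrow> y - y' \<in> Rq"
proof
  assume h: "coset Rq y = coset Rq y'"
  have "y \<in> coset Rq y" unfolding coset_def using Rq_0 by force
  then obtain b where "b \<in> Rq" "y = y' + b" using h unfolding coset_def by auto
  then show "y - y' \<in> Rq" by simp
next
  assume h: "y - y' \<in> Rq"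
  show "coset Rq y = coset Rq y'"
  proof (auto simp: coset_def image_iff)
    fix b :: "'r fract" assume "b \<in> Rq"
    then show "\<exists>x\<in>Rq. y + b = y' + x" using h Rq_add by (intro bexI[of _ "y - y' + b"]) auto
  next
    fix b :: "'r fract" assume "b \<in> Rq"
    then show "\<exists>x\<in>Rq. y' + b = y + x" using h Rq_diff by (intro bexI[of _ "b - (y - y')"]) auto
  qed
qed

lemma dvd_total:
  assumes "valuation_domain TYPE('r::idom)"
  shows "(a::'r) dvd b \<or> b dvd a"
proof -
  have id: "ring_ideal (principal c)" for c :: 'r
    unfolding ring_ideal_def principal_def
  proof (intro conjI ballI allI)
    show "0 \<in> {c * x |x. True}" by (auto intro: exI[of _ 0])
  next
    fix x y assume "x \<in> {c * x |x. True}" "y \<in> {c * x |x. True}"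
    then obtain a b where "x = c * a" "y = c * b" by auto
    then have "x + y = c * (a + b)" by (simp add: distrib_left)
    then show "x + y \<in> {c * x |x. True}" by blast
  next
    fix d x assume "x \<in> {c * x |x. True}"
    then obtain a where "x = c * a" by auto
    then have "d * x = c * (d * a)" by (simp add: mult.left_commute)
    then show "d * x \<in> {c * x |x. True}" by blast
  qed
  have "principal a \<subseteq> principal b \<or> principal b \<subseteq> principal a"
    using assms id unfolding valuation_domain_def by blast
  moreover have "a \<in> principal a" "b \<in> principal b" unfolding principal_def
    by (auto intro: exI[of _ 1])
  ultimately have "a \<in> principal b \<or> b \<in> principal a" by blast
  then show ?thesis unfolding principal_def dvd_def by blast
qed

lemma fract_compare:
  assumes "valuation_domain TYPE('r::idom)"
  shows "(\<exists>t. x = emb t * q) \<or> (\<exists>t. q = emb t * (x :: 'r fract))"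
proof -
  obtain a b where x: "x = Fract a b" "b \<noteq> 0" by (cases x) auto
  obtain c d where q: "q = Fract c d" "d \<noteq> 0" by (cases q) auto
  have "(b * c) dvd (a * d) \<or> (a * d) dvd (b * c)" using dvd_total[OF assms] by blast
  then show ?thesis
  proof
    assume "(b * c) dvd (a * d)"
    then obtain t where t: "a * d = b * c * t" by (auto simp: dvd_def)
    have "x = emb t * q" using x q t by (simp add: emb_def eq_fract algebra_simps)
    then show ?thesis by blast
  next
    assume "(a * d) dvd (b * c)"
    then obtain t where t: "b * c = a * d * t" by (auto simp: dvd_def)
    have "q = emb t * x" using x q t by (simp add: emb_def eq_fract algebra_simps)
    then show ?thesis by blast
  qed
qed

lemma Fract_Rq:
  assumes r: "(r::'r::idom) \<noteq> 0" shows "Fract m r \<in> Rq \<longleftrightarrow> r dvd m"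
proof -
  have "Fract m r \<in> Rq \<longleftrightarrow> (\<exists>k. Fract m r = Fract k 1)" by (simp add: Rq_iff emb_def)
  also have "\<dots> \<longleftrightarrow> (\<exists>k. m = k * r)" using r by (simp add: eq_fract)
  also have "\<dots> \<longleftrightarrow> r dvd m" by (auto simp: dvd_def mult.commute)
  finally show ?thesis .
qed

lemma z_lemma:
  assumes v: "valuation_domain TYPE('r::idom)" and r: "(r::'r) \<noteq> 0"
    and z: "\<forall>t. z * emb t \<in> Rq \<longleftrightarrow> r dvd t"
  shows "z \<in> rinv r" "\<forall>y\<in>rinv r. \<exists>t. z * emb t - y \<in> Rq"
proof -
  have "z * emb r \<in> Rq" using z by simp
  then obtain w where w: "z * emb r = emb w" by (auto simp: Rq_iff)
  have emr: "emb r \<noteq> 0" using r emb_inj[of r 0] by (simp add: emb_0)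
  have zw: "z = Fract w r"
  proof -
    have "z = emb w / emb r" using w emr by (simp add: field_simps)
    then show ?thesis using r by (simp add: emb_def)
  qed
  then show "z \<in> rinv r" by (auto simp: rinv_def)
  have key: "r dvd w * t \<longleftrightarrow> r dvd t" for t
  proof -
    have "z * emb t = Fract (w * t) r" using zw by (simp add: emb_def)
    moreover have "Fract (w * t) r \<in> Rq \<longleftrightarrow> r dvd w * t"
      using r by (rule Fract_Rq)
    ultimately show ?thesis using z[rule_format, of t] by simp
  qed
  show "\<forall>y\<in>rinv r. \<exists>t. z * emb t - y \<in> Rq"
  proof
    fix y assume "y \<in> rinv r"
    then obtain x where y: "y = Fract x r" by (auto simp: rinv_def)
    have diff: "z * emb t - y = Fract (w * t - x) r" for t
      using zw y r by (simp add: emb_def diff_fract_def eq_fract left_diff_distrib)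
    have inR: "r dvd m \<Longrightarrow> Fract m r \<in> Rq" for m
      using r Fract_Rq by blast
    have "w dvd r \<or> r dvd w" using dvd_total[OF v] by blast
    then show "\<exists>t. z * emb t - y \<in> Rq"
    proof
      assume "w dvd r"
      then obtain v where rv: "r = w * v" by (auto simp: dvd_def)
      then have "r dvd v" using key[of v] by simp
      then obtain k where "v = r * k" by (auto simp: dvd_def)
      with rv have "r * 1 = r * (w * k)" by (simp add: algebra_simps)
      then have wk: "w * k = 1" using r by simp
      have "w * (x * k) = x * (w * k)" by (simp add: ac_simps)
      then have e: "w * (x * k) - x = 0" using wk by simp
      have "Fract 0 r \<in> Rq" using inR[of 0] by simp
      moreover have "z * emb (x * k) - y = Fract 0 r" by (simp only: diff e)
      ultimately have "z * emb (x * k) - y \<in> Rq" by simp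
      then show ?thesis by blast
    next
      assume "r dvd w"
      then have "r dvd 1" using key[of 1] by simp
      then have "r dvd w * 0 - x" by (rule dvd_trans[OF _ one_dvd])
      then have "Fract (w * 0 - x) r \<in> Rq" by (rule inR)
      then have "z * emb 0 - y \<in> Rq" by (subst diff)
      then show ?thesis by blast
    qed
  qed
qed

lemma iso_restrict:
  fixes scale :: "'r::idom \<Rightarrow> 'm::ab_group_add \<Rightarrow> 'm" and \<Phi> :: "'m \<Rightarrow> 'r fract set"
  assumes m: "module scale" and v: "valuation_domain TYPE('r)" and r: "r \<noteq> 0"
    and ann: "Ann scale a0 = principal r"
    and addh: "\<forall>u u' y y'. \<Phi> u = coset Rq y \<longrightarrow> \<Phi> u' = coset Rq y' \<longrightarrow> \<Phi> (u + u') = coset Rq (y + y')"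
    and sch: "\<forall>u y c. \<Phi> u = coset Rq y \<longrightarrow> \<Phi> (scale c u) = coset Rq (emb c * y)"
    and za: "\<Phi> a0 = coset Rq z" and z: "\<forall>t. z * emb t \<in> Rq \<longleftrightarrow> r dvd t"
  shows "restrict \<Phi> (cyc scale a0) \<in> Iso_set scale a0 r"
proof -
  note MS[simp] = mod_simps[OF m]
  note zl = z_lemma[OF v r z]
  let ?C = "cyc scale a0"
  let ?p = "restrict \<Phi> ?C"
  have cycI: "scale t a0 \<in> ?C" for t unfolding cyc_def by auto
  have cycE: "x \<in> ?C \<Longrightarrow> \<exists>t. x = scale t a0" for x unfolding cyc_def by auto
  have phit: "\<Phi> (scale t a0) = coset Rq (z * emb t)" for t
    using sch za by (simp add: mult.commute)
  have zrinv: "z * emb t \<in> rinv r" for t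
  proof -
    obtain x where "z = Fract x r" using zl(1) by (auto simp: rinv_def)
    then have "z * emb t = Fract (x * t) r" by (simp add: emb_def)
    then show ?thesis by (auto simp: rinv_def)
  qed
  have qh: "quot_hom ?C scale (rinv r) Rq ?p"
    unfolding quot_hom_def
  proof (intro conjI ballI allI impI)
    fix x assume "x \<in> ?C"
    then obtain t where "x = scale t a0" using cycE by blast
    then show "\<exists>y\<in>rinv r. ?p x = coset Rq y" using phit zrinv cycI by auto
  next
    fix x x' y y' assume h: "x \<in> ?C" "x' \<in> ?C" "?p x = coset Rq y" "?p x' = coset Rq y'"
    obtain t t' where "x = scale t a0" "x' = scale t' a0" using h cycE by blast
    then have "x + x' = scale (t + t') a0" by (simp add: mod_ldist(1)[OF m])
    then have "x + x' \<in> ?C" using cycI by simp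
    then show "?p (x + x') = coset Rq (y + y')" using h addh by simp
  next
    fix c x y assume h: "x \<in> ?C" "?p x = coset Rq y"
    obtain t where "x = scale t a0" using h cycE by blast
    then have "scale c x \<in> ?C" using cycI by simp
    then show "?p (scale c x) = coset Rq (emb c * y)" using h sch by simp
  qed
  have inj: "inj_on ?p ?C"
  proof (rule inj_onI)
    fix x x' assume h: "x \<in> ?C" "x' \<in> ?C" "?p x = ?p x'"
    obtain t t' where tt: "x = scale t a0" "x' = scale t' a0" using h cycE by blast
    then have "coset Rq (z * emb t) = coset Rq (z * emb t')" using h phit by simp
    then have "z * emb t - z * emb t' \<in> Rq" by (simp add: coset_eq)
    then have "z * emb (t - t') \<in> Rq" by (simp add: emb_diff[symmetric] right_diff_distrib)
    then have "r dvd (t - t')" using z by blast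
    then have "t - t' \<in> Ann scale a0" using ann by (auto simp: principal_def dvd_def)
    then have "scale (t - t') a0 = 0" by (simp add: Ann_def)
    then show "x = x'" using tt by (simp add: mod_ldist(2)[OF m])
  qed
  have surj: "\<forall>y\<in>rinv r. \<exists>x\<in>?C. ?p x = coset Rq y"
  proof
    fix y assume "y \<in> rinv r"
    then obtain t where "z * emb t - y \<in> Rq" using zl(2) by blast
    then have "?p (scale t a0) = coset Rq y" using phit cycI by (simp add: coset_eq)
    then show "\<exists>x\<in>?C. ?p x = coset Rq y" using cycI by blast
  qed
  show ?thesis unfolding Iso_set_def using qh inj surj by simp
qed


lemma Rq_emb: "emb t \<in> Rq" by (auto simp: Rq_def)

lemma std_Phi:
  fixes scale :: "'r::idom \<Rightarrow> 'm::ab_group_add \<Rightarrow> 'm"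
  assumes m: "module scale" and v: "valuation_domain TYPE('r)" and std: "standard scale"
    and r0: "r0 \<noteq> 0" and ann0: "Ann scale a0 = principal r0" and a0: "a0 \<noteq> 0"
  shows "\<exists>\<Phi>. (\<forall>u u' y y'. \<Phi> u = coset Rq y \<longrightarrow> \<Phi> u' = coset Rq y' \<longrightarrow> \<Phi> (u + u') = coset Rq (y + y'))
     \<and> (\<forall>u y c. \<Phi> u = coset Rq y \<longrightarrow> \<Phi> (scale c u) = coset Rq (emb c * y))
     \<and> (\<forall>a r. Ann scale a = principal r \<longrightarrow> (\<exists>z. \<Phi> a = coset Rq z \<and> (\<forall>t. z * emb t \<in> Rq \<longleftrightarrow> r dvd t)))"
proof -
  note MS[simp] = mod_simps[OF m]
  obtain J' A and g :: "'r fract \<Rightarrow> 'm" where J': "qsub J'" and gadd: "\<forall>x\<in>J'. \<forall>y\<in>J'. g (x + y) = g x + g y"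
    and gsc: "\<forall>c. \<forall>x\<in>J'. g (emb c * x) = scale c (g x)" and gsurj: "g ` J' = UNIV"
    using std unfolding standard_def by blast
  have J0: "0 \<in> J'" and Jadd: "\<And>x y. x \<in> J' \<Longrightarrow> y \<in> J' \<Longrightarrow> x + y \<in> J'"
    and Jsc: "\<And>c x. x \<in> J' \<Longrightarrow> emb c * x \<in> J'" using J' unfolding qsub_def by auto
  have Jdiff: "x - y \<in> J'" if "x \<in> J'" "y \<in> J'" for x y
  proof -
    have "x + emb (-1) * y \<in> J'" using that Jadd Jsc by blast
    moreover have "x + emb (-1) * y = x - y" by (simp add: emb_minus[symmetric] emb_1)
    ultimately show ?thesis by simp
  qed
  have gdiff: "g (x - y) = g x - g y" if "x \<in> J'" "y \<in> J'" for x y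
  proof -
    have "g (x + emb (-1) * y) = g x + scale (-1) (g y)" using that gadd gsc Jsc by simp
    moreover have "x + emb (-1) * y = x - y" by (simp add: emb_minus[symmetric] emb_1)
    ultimately show ?thesis by simp
  qed
  have g0: "g 0 = 0" using gdiff[OF J0 J0] by simp
  define pre where "pre u = (SOME x. x \<in> J' \<and> g x = u)" for u
  have pre: "pre u \<in> J' \<and> g (pre u) = u" for u
  proof -
    have "\<exists>x. x \<in> J' \<and> g x = u" using gsurj by (metis UNIV_I imageE)
    then show ?thesis unfolding pre_def by (rule someI_ex)
  qed
  define q where "q = pre a0"
  have qJ: "q \<in> J'" and gq: "g q = a0" using pre q_def by auto
  have q0: "q \<noteq> 0" using gq g0 a0 by auto
  define d where "d = emb r0 * q"
  have er0: "emb r0 \<noteq> 0" using r0 emb_inj emb_0 by metis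
  have d0: "d \<noteq> 0" using er0 q0 d_def by simp
  define c where "c = inverse d"
  have r0ann: "scale r0 a0 = 0" using ann0 unfolding Ann_def principal_def by (auto intro: exI[of _ 1])
  have P: "c * x \<in> Rq \<longleftrightarrow> g x = 0" if xJ: "x \<in> J'" for x
  proof
    assume "c * x \<in> Rq"
    then obtain t where t: "c * x = emb t" by (auto simp: Rq_iff)
    then have "x = emb t * d" using d0 c_def by (simp add: field_simps)
    then have "x = emb (t * r0) * q" by (simp add: d_def emb_mult[symmetric] mult.assoc)
    then have "g x = scale (t * r0) a0" using gsc qJ gq by simp
    also have "\<dots> = 0" using r0ann by (simp add: mod_simps(1)[OF m, symmetric])
    finally show "g x = 0" .
  next
    assume gx: "g x = 0"
    show "c * x \<in> Rq"
    proof (cases "x = 0")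
      case True then show ?thesis using Rq_0 by simp
    next
      case False
      from fract_compare[OF v, of x q] show ?thesis
      proof
        assume "\<exists>t. x = emb t * q"
        then obtain t where t: "x = emb t * q" by blast
        then have "scale t a0 = 0" using gx gsc qJ gq by simp
        then have "t \<in> Ann scale a0" by (simp add: Ann_def)
        then have "t \<in> principal r0" using ann0 by simp
        then obtain k where k: "t = r0 * k" by (auto simp: principal_def)
        then have "x = emb k * d" using t by (simp add: d_def emb_mult[symmetric] algebra_simps)
        then have "c * x = emb k" using d0 c_def by simp
        then show ?thesis using Rq_emb by simp
      next
        assume "\<exists>t. q = emb t * x"
        then obtain t where t: "q = emb t * x" by blast
        then have "a0 = scale t 0" using gq gx gsc xJ by metis
        then show ?thesis using a0 by simp
      qed
    qed
  qed
  define \<Phi> where "\<Phi> u = coset Rq (c * pre u)" for u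
  have PhiG: "\<Phi> (g x) = coset Rq (c * x)" if "x \<in> J'" for x
  proof -
    have "pre (g x) - x \<in> J'" using Jdiff pre that by blast
    moreover have "g (pre (g x) - x) = 0" using gdiff pre that by simp
    ultimately have "c * (pre (g x) - x) \<in> Rq" using P by blast
    then show ?thesis unfolding \<Phi>_def by (simp add: coset_eq right_diff_distrib)
  qed
  have addh: "\<forall>u u' y y'. \<Phi> u = coset Rq y \<longrightarrow> \<Phi> u' = coset Rq y' \<longrightarrow> \<Phi> (u + u') = coset Rq (y + y')"
  proof (intro allI impI)
    fix u u' y y' assume h: "\<Phi> u = coset Rq y" "\<Phi> u' = coset Rq y'"
    have 1: "c * pre u - y \<in> Rq" "c * pre u' - y' \<in> Rq" using h unfolding \<Phi>_def by (simp_all add: coset_eq)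
    have "u + u' = g (pre u + pre u')" using gadd pre by simp
    then have pe: "\<Phi> (u + u') = coset Rq (c * (pre u + pre u'))" using PhiG Jadd pre by simp
    have e: "c * (pre u + pre u') - (y + y') = (c * pre u - y) + (c * pre u' - y')"
      by (simp add: algebra_simps)
    have "c * (pre u + pre u') - (y + y') \<in> Rq" unfolding e using 1 Rq_add by blast
    then have "coset Rq (c * (pre u + pre u')) = coset Rq (y + y')" using coset_eq by blast
    with pe show "\<Phi> (u + u') = coset Rq (y + y')" by (rule trans)
  qed
  have sch: "\<forall>u y c'. \<Phi> u = coset Rq y \<longrightarrow> \<Phi> (scale c' u) = coset Rq (emb c' * y)"
  proof (intro allI impI)
    fix u y c' assume h: "\<Phi> u = coset Rq y"
    have 1: "c * pre u - y \<in> Rq" using h unfolding \<Phi>_def by (simp_all add: coset_eq)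
    have "scale c' u = g (emb c' * pre u)" using gsc pre by simp
    then have pe: "\<Phi> (scale c' u) = coset Rq (c * (emb c' * pre u))" using PhiG Jsc pre by simp
    have e: "c * (emb c' * pre u) - emb c' * y = emb c' * (c * pre u - y)"
      by (simp add: algebra_simps)
    have "c * (emb c' * pre u) - emb c' * y \<in> Rq" unfolding e using 1 Rq_mult Rq_emb by blast
    then have "coset Rq (c * (emb c' * pre u)) = coset Rq (emb c' * y)" using coset_eq by blast
    with pe show "\<Phi> (scale c' u) = coset Rq (emb c' * y)" by (rule trans)
  qed
  have zz: "\<forall>a r. Ann scale a = principal r \<longrightarrow> (\<exists>z. \<Phi> a = coset Rq z \<and> (\<forall>t. z * emb t \<in> Rq \<longleftrightarrow> r dvd t))"
  proof (intro allI impI)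
    fix a r assume ann: "Ann scale a = principal r"
    have "(c * pre a) * emb t \<in> Rq \<longleftrightarrow> r dvd t" for t
    proof -
      have e1: "(c * pre a) * emb t = c * (emb t * pre a)" by (simp add: algebra_simps)
      have j1: "emb t * pre a \<in> J'" using Jsc pre by blast
      have g1: "g (emb t * pre a) = scale t a" using gsc pre by simp
      have a1: "scale t a = 0 \<longleftrightarrow> r dvd t" using ann
        by (auto simp: Ann_def principal_def dvd_def set_eq_iff)
      have "c * (emb t * pre a) \<in> Rq \<longleftrightarrow> r dvd t" using P[OF j1] g1 a1 by simp
      then show ?thesis unfolding e1 .
    qed
    then show "\<exists>z. \<Phi> a = coset Rq z \<and> (\<forall>t. z * emb t \<in> Rq \<longleftrightarrow> r dvd t)"
      unfolding \<Phi>_def by blast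
  qed
  show ?thesis using addh sch zz by blast
qed


lemma cyc_subspace:
  assumes m: "module scale"
  shows "module.subspace scale (cyc scale a)"
proof -
  note MS[simp] = mod_simps[OF m]
  show ?thesis unfolding cyc_def
  proof (rule module.subspaceI[OF m])
    show "0 \<in> range (\<lambda>r. scale r a)" by (auto intro: range_eqI[of _ _ 0])
  next
    fix x y assume "x \<in> range (\<lambda>r. scale r a)" "y \<in> range (\<lambda>r. scale r a)"
    then obtain s t where "x = scale s a" "y = scale t a" by auto
    then have "x + y = scale (s + t) a" by (simp add: mod_ldist(1)[OF m])
    then show "x + y \<in> range (\<lambda>r. scale r a)" by auto
  next
    fix c x assume "x \<in> range (\<lambda>r. scale r a)"
    then obtain s where "x = scale s a" by auto
    then have "scale c x = scale (c * s) a" by simp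
    then show "scale c x \<in> range (\<lambda>r. scale r a)" by auto
  qed
qed

lemma cyc_incl:
  fixes scale :: "'r::idom \<Rightarrow> 'm::ab_group_add \<Rightarrow> 'm"
  assumes m: "module scale" and v: "valuation_domain TYPE('r)" and u: "uniserial scale"
    and rs: "rs \<noteq> 0" and rdvd: "rs dvd rp"
    and anns: "Ann scale as = principal rs" and annp: "Ann scale ap = principal rp"
  shows "cyc scale as \<subseteq> cyc scale ap"
proof -
  note MS[simp] = mod_simps[OF m]
  have annI: "scale t a = 0 \<longleftrightarrow> r dvd t" if "Ann scale a = principal r" for a r t
    using that by (auto simp: Ann_def principal_def dvd_def set_eq_iff)
  have "cyc scale as \<subseteq> cyc scale ap \<or> cyc scale ap \<subseteq> cyc scale as"
    using u cyc_subspace[OF m] unfolding uniserial_def by blast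
  then show ?thesis
  proof
    assume "cyc scale ap \<subseteq> cyc scale as"
    moreover have "ap \<in> cyc scale ap" unfolding cyc_def by (auto intro: range_eqI[of _ _ 1])
    ultimately obtain s where s: "ap = scale s as" unfolding cyc_def by auto
    have sub: "cyc scale as \<subseteq> cyc scale ap" if asm: "as \<in> cyc scale ap"
    proof
      fix x assume "x \<in> cyc scale as"
      then obtain c where c: "x = scale c as" by (auto simp: cyc_def)
      obtain k where k: "as = scale k ap" using asm by (auto simp: cyc_def)
      have "x = scale (c * k) ap" using c k by simp
      then show "x \<in> cyc scale ap" unfolding cyc_def by (rule range_eqI)
    qed
    have "scale rs ap = 0" using s annI[OF anns] by (simp add: mult.commute)
    then have "rp dvd rs" using annI[OF annp] by simp
    have "s dvd rs \<or> rs dvd s" using dvd_total[OF v] by blast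
    then show ?thesis
    proof
      assume "rs dvd s"
      then have "scale s as = 0" using annI[OF anns] by simp
      then have "scale 1 ap = 0" using s by simp
      then have "rp dvd 1" using annI[OF annp] by blast
      then have "rs dvd 1" using rdvd dvd_trans by blast
      then have "as = 0" using annI[OF anns, of 1] by simp
      then have "as = scale 0 ap" by simp
      then have "as \<in> cyc scale ap" unfolding cyc_def by (rule range_eqI)
      then show ?thesis by (rule sub)
    next
      assume "s dvd rs"
      then obtain t where t: "rs = s * t" by (auto simp: dvd_def)
      have "scale t ap = 0" using s t annI[OF anns] by (simp add: mult.commute)
      then have "rp dvd t" using annI[OF annp] by simp
      then have "rs dvd t" using rdvd dvd_trans by blast
      then obtain k where k: "t = rs * k" by (auto simp: dvd_def)
      have t0: "t \<noteq> 0" using t rs by auto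
      have "t * 1 = t * (s * k)" using t k by (simp add: algebra_simps)
      then have "s * k = 1" using t0 by simp
      then have sk: "k * s = 1" by (simp add: mult.commute)
      have "as = scale k ap" using s sk by simp
      then have "as \<in> cyc scale ap" unfolding cyc_def by (rule range_eqI)
      then show ?thesis by (rule sub)
    qed
  qed
qed

lemma no_inj: assumes "inj_on (h::nat set \<Rightarrow> rat) (Field omega1)" shows False
proof -
  have "inj_on (to_nat \<circ> h) (Field omega1)" using assms by (simp add: comp_inj_on)
  hence "(card_of (Field omega1), card_of (UNIV::nat set)) \<in> ordLeq" using card_of_ordLeq by blast
  moreover have "(card_of (UNIV::nat set), natLeq) \<in> ordIso" by (rule card_of_nat)
  ultimately have "(card_of (Field omega1), natLeq) \<in> ordLeq"
    using ordLeq_transitive ordLeq_ordIso_trans by blast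
  moreover have "(card_of (Field omega1), omega1) \<in> ordIso"
    by (simp add: card_of_Field_ordIso cardSuc_Card_order natLeq_Card_order)
  ultimately have "(omega1, natLeq) \<in> ordLeq" using ordIso_symmetric ordIso_ordLeq_trans by blast
  moreover have "(natLeq, omega1) \<in> ordLess" by (simp add: cardSuc_greater natLeq_Card_order)
  ultimately show False using not_ordLess_ordLeq by blast
qed

lemma omega1_total: "\<sigma> \<in> Field omega1 \<Longrightarrow> \<rho> \<in> Field omega1 \<Longrightarrow> \<sigma> \<noteq> \<rho> \<Longrightarrow> (\<sigma>, \<rho>) \<in> omega1 \<or> (\<rho>, \<sigma>) \<in> omega1"
  using cardSuc_Well_order[OF natLeq_Card_order]
  unfolding well_order_on_def linear_order_on_def total_on_def by blast

theorem mainTheorem6: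
  fixes scale :: "'r::idom \<Rightarrow> 'm::ab_group_add \<Rightarrow> 'm"
    and rs :: "nat set \<Rightarrow> 'r"
    and a :: "nat set \<Rightarrow> 'm"
  assumes "valuation_domain TYPE('r)"
    and "(card_of (UNIV :: 'r set), omega1) \<in> ordIso"
    and "\<forall>\<sigma>\<in>Field omega1. rs \<sigma> \<noteq> 0"
    and "\<forall>\<sigma>\<in>Field omega1. \<forall>\<tau>\<in>Field omega1. (\<tau>, \<sigma>) \<in> omega1 \<and> \<tau> \<noteq> \<sigma> \<longrightarrow> rs \<tau> dvd rs \<sigma>"
    and "module scale"
    and "uniserial scale"
    and "has_type scale (\<Union>\<sigma>\<in>Field omega1. rinv (rs \<sigma>)) Rq"
    and "\<forall>\<sigma>\<in>Field omega1. Ann scale (a \<sigma>) = principal (rs \<sigma>)"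
    and "\<exists>f. special_family scale rs a f"
  shows "\<not> standard scale"
proof
  assume std: "standard scale"
  note v = assms(1) and r0 = assms(3) and dv = assms(4) and m = assms(5) and u = assms(6) and ann = assms(8)
  note MS[simp] = mod_simps[OF m]
  obtain f where sf: "special_family scale rs a f" using assms(9) by blast
  let ?F = "Field omega1"
  obtain \<Phi> :: "'m \<Rightarrow> 'r fract set" where
    addh: "\<forall>u u' y y'. \<Phi> u = coset Rq y \<longrightarrow> \<Phi> u' = coset Rq y' \<longrightarrow> \<Phi> (u + u') = coset Rq (y + y')"
    and sch: "\<forall>u y c. \<Phi> u = coset Rq y \<longrightarrow> \<Phi> (scale c u) = coset Rq (emb c * y)"
    and zz: "\<forall>\<sigma>\<in>?F. \<exists>z. \<Phi> (a \<sigma>) = coset Rq z \<and> (\<forall>t. z * emb t \<in> Rq \<longleftrightarrow> rs \<sigma> dvd t)"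
  proof (cases "\<exists>\<sigma>0\<in>?F. a \<sigma>0 \<noteq> 0")
    case True
    then obtain \<sigma>0 where s0: "\<sigma>0 \<in> ?F" and a0: "a \<sigma>0 \<noteq> 0" by blast
    have r0': "rs \<sigma>0 \<noteq> 0" using r0 s0 by blast
    have ann0: "Ann scale (a \<sigma>0) = principal (rs \<sigma>0)" using ann s0 by blast
    obtain \<Phi> where ABC:
      "(\<forall>u u' y y'. \<Phi> u = coset Rq y \<longrightarrow> \<Phi> u' = coset Rq y' \<longrightarrow> \<Phi> (u + u') = coset Rq (y + y'))
      \<and> (\<forall>u y c. \<Phi> u = coset Rq y \<longrightarrow> \<Phi> (scale c u) = coset Rq (emb c * y))
      \<and> (\<forall>a r. Ann scale a = principal r \<longrightarrow> (\<exists>z. \<Phi> a = coset Rq z \<and> (\<forall>t. z * emb t \<in> Rq \<longleftrightarrow> r dvd t)))"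
      using std_Phi[OF m v std r0' ann0 a0] by (rule exE)
    note A = ABC[THEN conjunct1] and B = ABC[THEN conjunct2, THEN conjunct1]
      and C = ABC[THEN conjunct2, THEN conjunct2]
    show ?thesis
    proof (rule that[of \<Phi>, OF A B])
      show "\<forall>\<sigma>\<in>?F. \<exists>z. \<Phi> (a \<sigma>) = coset Rq z \<and> (\<forall>t. z * emb t \<in> Rq \<longleftrightarrow> rs \<sigma> dvd t)"
      proof
        fix \<sigma> assume "\<sigma> \<in> ?F"
        then have "Ann scale (a \<sigma>) = principal (rs \<sigma>)" using ann by blast
        then show "\<exists>z. \<Phi> (a \<sigma>) = coset Rq z \<and> (\<forall>t. z * emb t \<in> Rq \<longleftrightarrow> rs \<sigma> dvd t)"
          by (rule C[rule_format])
      qed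
    qed
  next
    case False
    have c0: "coset Rq 0 = (Rq :: 'r fract set)" unfolding coset_def by simp
    have inR: "y \<in> Rq" if "Rq = coset Rq y" for y :: "'r fract"
    proof -
      have "coset Rq 0 = coset Rq y" using c0 that by simp
      then have "0 - y \<in> Rq" by (simp only: coset_eq)
      then have "0 - (0 - y) \<in> Rq" using Rq_diff Rq_0 by blast
      then show ?thesis by simp
    qed
    have eqR: "Rq = coset Rq y" if "y \<in> Rq" for y :: "'r fract"
    proof -
      have "0 - y \<in> Rq" using Rq_diff Rq_0 that by blast
      then have "coset Rq 0 = coset Rq y" by (simp only: coset_eq)
      then show ?thesis using c0 by simp
    qed
    show ?thesis
    proof (rule that[of "\<lambda>_. Rq"])
      show "\<forall>(u::'m) u' y y'. (Rq::'r fract set) = coset Rq y \<longrightarrow> (Rq::'r fract set) = coset Rq y' \<longrightarrow> (Rq::'r fract set) = coset Rq (y + y')"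
      proof (intro allI impI)
        fix u u' :: 'm and y y' :: "'r fract"
        assume h1: "Rq = coset Rq y" and h2: "Rq = coset Rq y'"
        show "Rq = coset Rq (y + y')" by (rule eqR[OF Rq_add[OF inR[OF h1] inR[OF h2]]])
      qed
      show "\<forall>(u::'m) y c. (Rq::'r fract set) = coset Rq y \<longrightarrow> (Rq::'r fract set) = coset Rq (emb c * y)"
      proof (intro allI impI)
        fix u :: 'm and y :: "'r fract" and c :: 'r
        assume h1: "Rq = coset Rq y"
        show "Rq = coset Rq (emb c * y)" by (rule eqR[OF Rq_mult[OF Rq_emb inR[OF h1]]])
      qed
      show "\<forall>\<sigma>\<in>?F. \<exists>z. Rq = coset Rq z \<and> (\<forall>t. z * emb t \<in> Rq \<longleftrightarrow> rs \<sigma> dvd t)"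
      proof
        fix \<sigma> assume s: "\<sigma> \<in> ?F"
        then have "a \<sigma> = 0" using False by blast
        then have "1 \<in> Ann scale (a \<sigma>)" by (simp add: Ann_def)
        then have "1 \<in> principal (rs \<sigma>)" using ann s by simp
        then have "rs \<sigma> dvd 1" unfolding principal_def dvd_def by auto
        then have dd: "rs \<sigma> dvd t" for t using one_dvd dvd_trans by blast
        have "(Rq::'r fract set) = coset Rq 0 \<and> (\<forall>t. 0 * emb t \<in> Rq \<longleftrightarrow> rs \<sigma> dvd t)"
          using c0 Rq_0 dd by simp
        then show "\<exists>z. Rq = coset Rq z \<and> (\<forall>t. z * emb t \<in> Rq \<longleftrightarrow> rs \<sigma> dvd t)"
          by blast
      qed
    qed
  qed
  define \<phi> where "\<phi> \<sigma> = restrict \<Phi> (cyc scale (a \<sigma>))" for \<sigma>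
  have iso: "\<phi> \<sigma> \<in> Iso_set scale (a \<sigma>) (rs \<sigma>)" if "\<sigma> \<in> ?F" for \<sigma>
  proof -
    have "\<exists>z. \<Phi> (a \<sigma>) = coset Rq z \<and> (\<forall>t. z * emb t \<in> Rq \<longleftrightarrow> rs \<sigma> dvd t)" using zz that by (rule bspec)
    then obtain z where zb: "\<Phi> (a \<sigma>) = coset Rq z \<and> (\<forall>t. z * emb t \<in> Rq \<longleftrightarrow> rs \<sigma> dvd t)" by (rule exE)
    note z1 = zb[THEN conjunct1] and z2 = zb[THEN conjunct2]
    have rr: "rs \<sigma> \<noteq> 0" using r0 that by (rule bspec)
    have aa: "Ann scale (a \<sigma>) = principal (rs \<sigma>)" using ann that by (rule bspec)
    show ?thesis unfolding \<phi>_def by (rule iso_restrict[OF m v rr aa addh sch z1 z2])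
  qed
  define h where "h \<sigma> = f \<sigma> (\<phi> \<sigma>)" for \<sigma>
  have lt: "h \<sigma> < h \<rho>" if "\<sigma> \<in> ?F" "\<rho> \<in> ?F" "(\<sigma>, \<rho>) \<in> omega1" "\<sigma> \<noteq> \<rho>" for \<sigma> \<rho>
  proof -
    have rr: "rs \<sigma> \<noteq> 0" using r0 that(1) by (rule bspec)
    have d1: "rs \<sigma> dvd rs \<rho>" using dv[rule_format, OF that(2) that(1)] that(3,4) by blast
    have aa: "Ann scale (a \<sigma>) = principal (rs \<sigma>)" using ann that(1) by (rule bspec)
    have ab: "Ann scale (a \<rho>) = principal (rs \<rho>)" using ann that(2) by (rule bspec)
    have "cyc scale (a \<sigma>) \<subseteq> cyc scale (a \<rho>)"
      by (rule cyc_incl[OF m v u rr d1 aa ab])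
    then have agree: "\<forall>x\<in>cyc scale (a \<sigma>). \<phi> \<rho> x = \<phi> \<sigma> x" unfolding \<phi>_def by auto
    show ?thesis unfolding h_def
      by (rule sf[unfolded special_family_def, rule_format, OF that(1) that(2) conjI[OF that(3) that(4)]
            iso[OF that(2)] iso[OF that(1)] agree[rule_format]])
  qed
  have "inj_on h ?F"
  proof (rule inj_onI, rule ccontr)
    fix \<sigma> \<rho> assume "\<sigma> \<in> ?F" "\<rho> \<in> ?F" "h \<sigma> = h \<rho>" "\<sigma> \<noteq> \<rho>"
    then have "(\<sigma>, \<rho>) \<in> omega1 \<or> (\<rho>, \<sigma>) \<in> omega1" using omega1_total by blast
    then have "h \<sigma> < h \<rho> \<or> h \<rho> < h \<sigma>" using lt \<open>\<sigma> \<in> ?F\<close> \<open>\<rho> \<in> ?F\<close> \<open>\<sigma> \<noteq> \<rho>\<close> by blast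
    then show False using \<open>h \<sigma> = h \<rho>\<close> by simp
  qed
  then show False by (rule no_inj)
qed

end
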